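(* With $S$, $\lambda$ (growing fast enough), $\varphi(x)=x+1$ and $C_{RD}(\mathbb Z_S)$ as in the context, let $B^1_{RD}=\{g\circ\varphi-g:\ g\in C_{RD}(\mathbb Z_S)\}$. Then the first rapid decay cohomology group $H^1_{RD}(\mathbb Z_S,\varphi)=C_{RD}(\mathbb Z_S)/B^1_{RD}$ is isomorphic to $\mathbb C$, the isomorphism being induced by $f\mapsto\int_{\mathbb Z_S}f\,dx$.
   Context: Odometer $\mathbb Z_S=\varprojlim\mathbb Z/s_m\mathbb Z$ for a scale $(s_m)$ with $S=\mathrm{lcm}(s_m)$ infinite; $dx$ normalized Haar measure; $\varphi(x)=x+1$. Cocycles $\rho:\mathbb N\times\mathbb Z_S\to\mathbb C$ (satisfying $\rho(k+l,x)=\rho(k,x)+\rho(k,\varphi^l(x))$) are determined by $r=\rho(1,\cdot)$ via $\rho(k,x)=\sum_{i=0}^{k-1}r(\varphi^i(x))$; in the rapid decay setting the cocycles correspond to $r\in C_{RD}(\mathbb Z_S)$ and coboundaries to $r=g\circ\varphi-g$ with $g\in C_{RD}(\mathbb Z_S)$, so $H^1_{RD}$ is the quotient above. $\widetilde{\mathbb Z_S}=\{z\in\mathbb C:z^s=1\text{ for some } s\mid S\}$; $\chi_z(1)=z$; $\hat f_z=\int f\chi_{\bar z}dx$; $\lambda$ is a non-archimedean length function ($\lambda:\widetilde{\mathbb Z_S}\to[1,\infty)$, $\lambda(z)=1$ iff $z=1$, $\lambda(z_1z_2)\le\max\{\lambda(z_1),\lambda(z_2)\}$, $\{\lambda\le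 r\}$ finite) growing fast enough ($\lambda(z)\ge c\,\mathrm{ord}(z)^\alpha$ for some $c,\alpha>0$); $\|f\|_N=\sum_z|\hat f_z|\lambda(z)^N$; $C_{RD}(\mathbb Z_S)=\{f\in C(\mathbb Z_S):\|f\|_N<\infty\ \forall N\}$. *)

theory Defs
  imports "HOL-Analysis.Analysis"
begin

text \<open>A scale: positive integers s 0, s 1, ... with s m dividing s (m+1).
  The supernatural S = lcm(s m) is infinite iff the s m are unbounded.\<close>
definition is_scale :: "(nat \<Rightarrow> nat) \<Rightarrow> bool" where
  "is_scale s \<longleftrightarrow> (\<forall>m. 0 < s m \<and> s m dvd s (Suc m))"

definition infinite_lcm :: "(nat \<Rightarrow> nat) \<Rightarrow> bool" where
  "infinite_lcm s \<longleftrightarrow> (\<forall>n. \<exists>m. n < s m)"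

text \<open>The odometer Z_S = inverse limit of Z/(s m)Z, realised as compatible sequences
  of residues, as a subspace of (nat => int) with the product topology.\<close>
definition odometer :: "(nat \<Rightarrow> nat) \<Rightarrow> (nat \<Rightarrow> int) set" where
  "odometer s = {x. \<forall>m. 0 \<le> x m \<and> x m < int (s m) \<and> x m = x (Suc m) mod int (s m)}"

definition odo_of_int :: "(nat \<Rightarrow> nat) \<Rightarrow> int \<Rightarrow> (nat \<Rightarrow> int)" where
  "odo_of_int s k = (\<lambda>m. k mod int (s m))"

definition odo_phi :: "(nat \<Rightarrow> nat) \<Rightarrow> (nat \<Rightarrow> int) \<Rightarrow> (nat \<Rightarrow> int)" where
  "odo_phi s x = (\<lambda>m. (x m + 1) mod int (s m))"

text \<open>Integral with respect to the normalized Haar measure dx, for continuous f: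
  the limit of the averages over the cosets of the level-m subgroups
  (each cylinder {x. x m = k} has Haar measure 1 / s m).\<close>
definition haar_integral :: "(nat \<Rightarrow> nat) \<Rightarrow> ((nat \<Rightarrow> int) \<Rightarrow> complex) \<Rightarrow> complex" where
  "haar_integral s f = lim (\<lambda>m. (\<Sum>k<s m. f (odo_of_int s (int k))) / of_nat (s m))"

text \<open>The dual group: roots of unity of order dividing S.\<close>
definition dual_odometer :: "(nat \<Rightarrow> nat) \<Rightarrow> complex set" where
  "dual_odometer s = {z. \<exists>m. z ^ s m = 1}"

definition root_order :: "complex \<Rightarrow> nat" where
  "root_order z = (LEAST n. 0 < n \<and> z ^ n = 1)"

text \<open>The character chi_z with chi_z(1) = z.\<close>
definition odo_char :: "(nat \<Rightarrow> nat) \<Rightarrow> complex \<Rightarrow> (nat \<Rightarrow> int) \<Rightarrow> complex" where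
  "odo_char s z x = z ^ nat (x (LEAST m. z ^ s m = 1))"

definition fourier_coeff :: "(nat \<Rightarrow> nat) \<Rightarrow> ((nat \<Rightarrow> int) \<Rightarrow> complex) \<Rightarrow> complex \<Rightarrow> complex" where
  "fourier_coeff s f z = haar_integral s (\<lambda>x. f x * odo_char s (cnj z) x)"

definition good_length :: "(nat \<Rightarrow> nat) \<Rightarrow> (complex \<Rightarrow> real) \<Rightarrow> bool" where
  "good_length s lam \<longleftrightarrow>
     (\<forall>z\<in>dual_odometer s. 1 \<le> lam z) \<and>
     (\<forall>z\<in>dual_odometer s. lam z = 1 \<longleftrightarrow> z = 1) \<and>
     (\<forall>z1\<in>dual_odometer s. \<forall>z2\<in>dual_odometer s. lam (z1 * z2) \<le> max (lam z1) (lam z2)) \<and>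
     (\<forall>r. finite {z\<in>dual_odometer s. lam z \<le> r}) \<and>
     (\<exists>c \<alpha>. 0 < c \<and> 0 < \<alpha> \<and> (\<forall>z\<in>dual_odometer s. c * real (root_order z) powr \<alpha> \<le> lam z))"

definition C_RD :: "(nat \<Rightarrow> nat) \<Rightarrow> (complex \<Rightarrow> real) \<Rightarrow> ((nat \<Rightarrow> int) \<Rightarrow> complex) set" where
  "C_RD s lam = {f. continuous_on (odometer s) f \<and>
     (\<forall>N::nat. (\<lambda>z. norm (fourier_coeff s f z) * lam z ^ N) summable_on dual_odometer s)}"

definition B1_RD :: "(nat \<Rightarrow> nat) \<Rightarrow> (complex \<Rightarrow> real) \<Rightarrow> ((nat \<Rightarrow> int) \<Rightarrow> complex) set" where
  "B1_RD s lam = {f. \<exists>g\<in>C_RD s lam. \<forall>x\<in>odometer s. f x = g (odo_phi s x) - g x}"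

end

theory Submission
  imports Defs
begin

locale odo =
  fixes s :: "nat \<Rightarrow> nat"
  assumes scale: "is_scale s" and inflcm: "infinite_lcm s"
begin

lemma spos: "0 < s m" using scale by (simp add: is_scale_def)

lemma sdvd: "m \<le> n \<Longrightarrow> s m dvd s n"
proof (induction n rule: dec_induct)
  case base then show ?case by simp
next
  case (step n) then show ?case using scale dvd_trans unfolding is_scale_def by blast
qed

lemma smono: "m \<le> n \<Longrightarrow> s m \<le> s n"
  using sdvd spos by (simp add: dvd_imp_le)

lemma s_large: "\<exists>M. \<forall>m\<ge>M. K < s m"
proof -
  obtain M where "K < s M" using inflcm unfolding infinite_lcm_def by blast
  then show ?thesis using smono by (meson less_le_trans)
qed

lemma odoD: "x \<in> odometer s \<Longrightarrow> 0 \<le> x m \<and> x m < int (s m) \<and> x m = x (Suc m) mod int (s m)"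
  unfolding odometer_def by blast

lemma odo_compat: assumes "x \<in> odometer s" "i \<le> j" shows "x i = x j mod int (s i)"
  using assms(2)
proof (induction j rule: dec_induct)
  case base
  then show ?case using odoD[OF assms(1), of i] by simp
next
  case (step j)
  have "x j = x (Suc j) mod int (s j)" using odoD[OF assms(1)] by blast
  moreover have "int (s i) dvd int (s j)" using sdvd step.hyps by simp
  ultimately show ?case using step.IH by (simp add: mod_mod_cancel)
qed

lemma odo_eq_below: "x \<in> odometer s \<Longrightarrow> y \<in> odometer s \<Longrightarrow> x M = y M \<Longrightarrow> i \<le> M \<Longrightarrow> x i = y i"
  using odo_compat[of x i M] odo_compat[of y i M] by simp

lemma odo_of_int_in: "odo_of_int s k \<in> odometer s"
  unfolding odometer_def odo_of_int_def
proof (intro CollectI allI conjI)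
  fix m
  show "0 \<le> k mod int (s m)" "k mod int (s m) < int (s m)" using spos[of m] by simp_all
  show "k mod int (s m) = k mod int (s (Suc m)) mod int (s m)"
    using sdvd[of m "Suc m"] by (simp only: mod_mod_cancel of_nat_dvd_iff le_Suc_eq order_refl disj_not1 simp_thms)
qed

lemma odo_of_int_at: "odo_of_int s k m = k mod int (s m)"
  by (simp add: odo_of_int_def)

lemma odo_phi_of_int: "odo_phi s (odo_of_int s k) = odo_of_int s (k+1)"
  by (simp add: odo_phi_def odo_of_int_def fun_eq_iff mod_add_left_eq)

lemma odo_phi_in: assumes "x \<in> odometer s" shows "odo_phi s x \<in> odometer s"
  unfolding odometer_def odo_phi_def
proof (intro CollectI allI conjI)
  fix m
  show "0 \<le> (x m + 1) mod int (s m)" "(x m + 1) mod int (s m) < int (s m)" using spos[of m] by simp_all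
  have e: "x m = x (Suc m) mod int (s m)" using odoD[OF assms] by blast
  have d: "int (s m) dvd int (s (Suc m))" using sdvd[of m "Suc m"] by simp
  have "((x (Suc m) + 1) mod int (s (Suc m))) mod int (s m) = (x (Suc m) + 1) mod int (s m)"
    using d by (rule mod_mod_cancel)
  also have "\<dots> = (x (Suc m) mod int (s m) + 1) mod int (s m)" by (rule mod_add_left_eq[symmetric])
  finally show "(x m + 1) mod int (s m) = (x (Suc m) + 1) mod int (s (Suc m)) mod int (s m)"
    using e by simp
qed

lemma odo_phi_at: "odo_phi s x M = (x M + 1) mod int (s M)"
  by (simp add: odo_phi_def)

definition cylset :: "nat \<Rightarrow> (nat \<Rightarrow> int) set" where
  "cylset m = {x. 0 \<le> x m \<and> x m < int (s m) \<and> x m = x (Suc m) mod int (s m)}"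

lemma compact_box: "compact (PiE UNIV (\<lambda>m. {0..int (s m)}))"
proof -
  have "compactin (product_topology (\<lambda>i. euclidean) UNIV) (PiE UNIV (\<lambda>m. {0..int (s m)}))"
    by (subst compactin_PiE) (simp add: finite_imp_compact)
  then show ?thesis by (simp add: euclidean_product_topology)
qed

lemma cont_coord: "continuous_on UNIV (\<lambda>x::nat\<Rightarrow>int. f (x i))" for f :: "int \<Rightarrow> int"
  using continuous_on_compose2[OF Topological_Spaces.continuous_on_discrete[of UNIV f] continuous_on_product_coordinates[of i]] by simp

lemma closed_cylset: "closed (cylset m)"
proof -
  have e: "cylset m
      = {x. (\<lambda>a. if 0 \<le> a \<and> a < int (s m) then 1 else 0) (x m) = (\<lambda>a. 1::int) (x m)} \<inter> {x. id (x m) = (\<lambda>a. a mod int (s m)) (x (Suc m))}"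
    unfolding cylset_def by (auto split: if_splits)
  show ?thesis unfolding e
    by (intro closed_Int closed_Collect_eq cont_coord)
qed

lemma odo_eq_cyl: "odometer s = PiE UNIV (\<lambda>m. {0..int (s m)}) \<inter> (\<Inter>m. cylset m)"
proof (intro set_eqI iffI)
  fix x assume x: "x \<in> odometer s"
  have "x \<in> cylset m" for m using odoD[OF x, of m] unfolding cylset_def by blast
  moreover have "x m \<in> {0..int (s m)}" for m using odoD[OF x, of m] by simp
  ultimately show "x \<in> PiE UNIV (\<lambda>m. {0..int (s m)}) \<inter> (\<Inter>m. cylset m)"
    by (simp add: PiE_UNIV_domain Pi_iff)
next
  fix x assume "x \<in> PiE UNIV (\<lambda>m. {0..int (s m)}) \<inter> (\<Inter>m. cylset m)"
  then have "\<forall>m. x \<in> cylset m" by blast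
  then show "x \<in> odometer s" unfolding cylset_def odometer_def by blast
qed

lemma compact_odo: "compact (odometer s)"
  unfolding odo_eq_cyl
  by (intro compact_Int_closed compact_box closed_INT ballI closed_cylset)

definition ucyl :: "((nat \<Rightarrow> int) \<Rightarrow> complex) \<Rightarrow> bool" where
  "ucyl h \<longleftrightarrow> (\<forall>e>0. \<exists>M. \<forall>x\<in>odometer s. \<forall>y\<in>odometer s. x M = y M \<longrightarrow> norm (h x - h y) < e)"

lemma ucylD: "ucyl h \<Longrightarrow> e > 0 \<Longrightarrow> \<exists>M. \<forall>x\<in>odometer s. \<forall>y\<in>odometer s. x M = y M \<longrightarrow> norm (h x - h y) < e"
  by (simp add: ucyl_def)

lemma ucyl_mono: "x \<in> odometer s \<Longrightarrow> y \<in> odometer s \<Longrightarrow> x M' = y M' \<Longrightarrow> M \<le> M' \<Longrightarrow> x M = y M"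
  using odo_eq_below by blast

lemma open_cyl: "open {y::nat\<Rightarrow>int. y M = c}"
proof -
  have "{y::nat\<Rightarrow>int. y M = c} = (\<lambda>y. y M) -` {c}" by auto
  then show ?thesis using open_vimage[OF open_discrete[of "{c}"] continuous_on_product_coordinates[of M]] by simp
qed

lemma open_contains_cyl:
  assumes "open U" "(x::nat\<Rightarrow>int) \<in> U"
  shows "\<exists>K. \<forall>y. (\<forall>i\<le>K. y i = x i) \<longrightarrow> y \<in> U"
proof -
  have "openin (product_topology (\<lambda>i. euclidean) UNIV) U"
    using assms(1) unfolding open_fun_def by auto
  from product_topology_open_contains_basis[OF this assms(2)]
  obtain X where H: "x \<in> (\<Pi>\<^sub>E i\<in>UNIV. X i)" "finite {i. X i \<noteq> UNIV}" "(\<Pi>\<^sub>E i\<in>UNIV. X i) \<subseteq> U"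
    by auto
  define K where "K = Max (insert 0 {i. X i \<noteq> UNIV})"
  show ?thesis
  proof (intro exI allI impI)
    fix y :: "nat \<Rightarrow> int" assume y: "\<forall>i\<le>K. y i = x i"
    have "y i \<in> X i" for i
    proof (cases "X i = UNIV")
      case False
      then have "i \<le> K" unfolding K_def using H(2) by (intro Max_ge) auto
      then show ?thesis using y H(1) by auto
    qed simp
    then have "y \<in> (\<Pi>\<^sub>E i\<in>UNIV. X i)" by auto
    then show "y \<in> U" using H(3) by blast
  qed
qed

lemma cont_ucyl: assumes "continuous_on (odometer s) h" shows "ucyl h"
  unfolding ucyl_def
proof (intro allI impI)
  fix e :: real assume "e > 0"
  have loc: "\<exists>K. \<forall>y\<in>odometer s. y K = x K \<longrightarrow> norm (h y - h x) < e/2" if x: "x \<in> odometer s" for x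
  proof -
    obtain A where A: "open A" "x \<in> A" "\<forall>y\<in>odometer s. y \<in> A \<longrightarrow> h y \<in> ball (h x) (e/2)"
      using assms x \<open>e > 0\<close> unfolding continuous_on_topological
      by (metis centre_in_ball half_gt_zero open_ball)
    obtain K where K: "\<forall>y. (\<forall>i\<le>K. y i = x i) \<longrightarrow> y \<in> A" using open_contains_cyl[OF A(1,2)] by blast
    have "norm (h y - h x) < e/2" if "y \<in> odometer s" "y K = x K" for y
    proof -
      have "\<forall>i\<le>K. y i = x i" using odo_eq_below[OF that(1) x that(2)] by blast
      then have "h y \<in> ball (h x) (e/2)" using K A(3) that(1) by blast
      then show ?thesis by (simp add: dist_norm norm_minus_commute)
    qed
    then show ?thesis by blast
  qed
  then obtain K where K: "\<And>x y. x \<in> odometer s \<Longrightarrow> y \<in> odometer s \<Longrightarrow> y (K x) = x (K x) \<Longrightarrow> norm (h y - h x) < e/2"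
    by metis
  have cov: "odometer s \<subseteq> (\<Union>x\<in>odometer s. {y. y (K x) = x (K x)})" by blast
  obtain C' where C': "C' \<subseteq> odometer s" "finite C'" "odometer s \<subseteq> (\<Union>x\<in>C'. {y. y (K x) = x (K x)})"
    using compactE_image[OF compact_odo open_cyl cov] by blast
  define M where "M = Max (K ` C')"
  show "\<exists>M. \<forall>x\<in>odometer s. \<forall>y\<in>odometer s. x M = y M \<longrightarrow> norm (h x - h y) < e"
  proof (intro exI ballI impI)
    fix y z assume yz: "y \<in> odometer s" "z \<in> odometer s" "y M = z M"
    obtain x where x: "x \<in> C'" "y (K x) = x (K x)" using C'(3) yz(1) by blast
    have "K x \<le> M" unfolding M_def using x(1) C'(2) by simp
    then have "z (K x) = y (K x)" using odo_eq_below[OF yz] by simp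
    then have "norm (h y - h x) < e/2" "norm (h z - h x) < e/2"
      using K[of x y] K[of x z] x C'(1) yz by auto
    then have "norm (h y - h x) + norm (h z - h x) < e" by simp
    moreover have "norm (h y - h z) \<le> norm (h y - h x) + norm (h z - h x)"
      by (metis norm_diff_triangle_le norm_minus_commute order_refl)
    ultimately show "norm (h y - h z) < e" by linarith
  qed
qed

lemma ucyl_cont: assumes "ucyl h" shows "continuous_on (odometer s) h"
  unfolding continuous_on_topological
proof (intro ballI allI impI)
  fix x B assume x: "x \<in> odometer s" and B: "open B" "h x \<in> B"
  obtain e where e: "e > 0" "ball (h x) e \<subseteq> B" using B open_contains_ball by blast
  obtain M where M: "\<forall>x\<in>odometer s. \<forall>y\<in>odometer s. x M = y M \<longrightarrow> norm (h x - h y) < e"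
    using ucylD[OF assms e(1)] by blast
  show "\<exists>A. open A \<and> x \<in> A \<and> (\<forall>y\<in>odometer s. y \<in> A \<longrightarrow> h y \<in> B)"
  proof (intro exI[of _ "{y. y M = x M}"] conjI ballI impI)
    show "open {y. y M = x M}" by (rule open_cyl)
    show "x \<in> {y. y M = x M}" by simp
    fix y assume "y \<in> odometer s" "y \<in> {y. y M = x M}"
    then have "norm (h x - h y) < e" using M x by auto
    then show "h y \<in> B" using e(2) by (auto simp: dist_norm)
  qed
qed


definition avg :: "nat \<Rightarrow> ((nat \<Rightarrow> int) \<Rightarrow> complex) \<Rightarrow> complex" where
  "avg m h = (\<Sum>k<s m. h (odo_of_int s (int k))) / of_nat (s m)"

lemma haar_eq: "haar_integral s h = lim (\<lambda>m. avg m h)"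
  by (simp add: haar_integral_def avg_def)

lemma sum_mod_rep:
  fixes F :: "nat \<Rightarrow> 'a::comm_semiring_1"
  assumes "0 < b"
  shows "(\<Sum>k<a*b. F (k mod b)) = of_nat a * (\<Sum>j<b. F j)"
proof (induction a)
  case 0 then show ?case by simp
next
  case (Suc a)
  have "(\<Sum>k<Suc a * b. F (k mod b)) = (\<Sum>k\<in>{0..<a*b}. F (k mod b)) + (\<Sum>k\<in>{a*b..<a*b+b}. F (k mod b))"
    by (subst sum.atLeastLessThan_concat) (auto simp: atLeast0LessThan add.commute)
  also have "(\<Sum>k\<in>{a*b..<a*b+b}. F (k mod b)) = (\<Sum>j\<in>{0..<b}. F ((j + a*b) mod b))"
    using sum.shift_bounds_nat_ivl[of "\<lambda>k. F (k mod b)" 0 "a*b" b] by (simp add: add.commute)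
  also have "\<dots> = (\<Sum>j<b. F j)" by (intro sum.cong) auto
  finally show ?case using Suc by (simp add: atLeast0LessThan algebra_simps)
qed

lemma avg_add: "avg m (\<lambda>x. f x + g x) = avg m f + avg m g"
  by (simp add: avg_def sum.distrib add_divide_distrib)

lemma avg_diff: "avg m (\<lambda>x. f x - g x) = avg m f - avg m g"
  by (simp add: avg_def sum_subtractf diff_divide_distrib)

lemma avg_cmult: "avg m (\<lambda>x. c * f x) = c * avg m f"
  by (simp add: avg_def sum_distrib_left)

lemma avg_sum: "avg m (\<lambda>x. \<Sum>i\<in>I. f i x) = (\<Sum>i\<in>I. avg m (f i))"
  by (simp add: avg_def sum.swap[of _ I] sum_divide_distrib)

lemma avg_bound: assumes "\<And>x. x \<in> odometer s \<Longrightarrow> norm (h x) \<le> B" shows "norm (avg m h) \<le> B"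
proof -
  have "norm (\<Sum>k<s m. h (odo_of_int s (int k))) \<le> (\<Sum>k<s m. B)"
    by (intro sum_norm_le assms odo_of_int_in)
  then have "norm (\<Sum>k<s m. h (odo_of_int s (int k))) \<le> of_nat (s m) * B" by simp
  then show ?thesis using spos[of m] by (simp add: avg_def norm_divide field_simps)
qed

lemma avg_close:
  assumes h: "\<forall>x\<in>odometer s. \<forall>y\<in>odometer s. x M = y M \<longrightarrow> norm (h x - h y) < e"
    and m: "M \<le> m"
  shows "norm (avg m h - avg M h) \<le> e"
proof -
  obtain a where a: "s m = a * s M" using sdvd[OF m] by (auto simp: dvd_def mult.commute)
  have "(\<Sum>k<s m. h (odo_of_int s (int (k mod s M)))) = of_nat a * (\<Sum>j<s M. h (odo_of_int s (int j)))"
    unfolding a by (rule sum_mod_rep[OF spos])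
  then have avM: "avg M h = (\<Sum>k<s m. h (odo_of_int s (int (k mod s M)))) / of_nat (s m)"
    using spos[of M] spos[of m] a by (simp add: avg_def)
  define D where "D = (\<Sum>k<s m. h (odo_of_int s (int k)) - h (odo_of_int s (int (k mod s M))))"
  have eq: "avg m h - avg M h = D / of_nat (s m)"
    unfolding avM D_def by (simp add: avg_def sum_subtractf diff_divide_distrib)
  have "norm D \<le> (\<Sum>k<s m. e)" unfolding D_def
  proof (intro sum_norm_le less_imp_le)
    fix k
    have "odo_of_int s (int k) M = odo_of_int s (int (k mod s M)) M"
      by (simp add: odo_of_int_at zmod_int)
    then show "norm (h (odo_of_int s (int k)) - h (odo_of_int s (int (k mod s M)))) < e"
      using h odo_of_int_in by blast
  qed
  then have "norm D \<le> e * real (s m)" by (simp add: mult.commute)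
  moreover have "norm (avg m h - avg M h) = norm D / real (s m)" unfolding eq by (simp add: norm_divide)
  ultimately show ?thesis using spos[of m] by (simp add: divide_le_eq)
qed

lemma ucyl_conv: assumes "ucyl h" shows "convergent (\<lambda>m. avg m h)"
proof -
  have "Cauchy (\<lambda>m. avg m h)"
  proof (rule metric_CauchyI)
    fix e :: real assume "e > 0"
    then obtain M where M: "\<forall>x\<in>odometer s. \<forall>y\<in>odometer s. x M = y M \<longrightarrow> norm (h x - h y) < e/3"
      using ucylD[OF assms, of "e/3"] by auto
    show "\<exists>M. \<forall>m\<ge>M. \<forall>n\<ge>M. dist (avg m h) (avg n h) < e"
    proof (intro exI allI impI)
      fix m n assume "M \<le> m" "M \<le> n"
      then have "norm (avg m h - avg M h) \<le> e/3" "norm (avg n h - avg M h) \<le> e/3"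
        using avg_close[OF M] by auto
      moreover have "norm (avg m h - avg n h) \<le> norm (avg m h - avg M h) + norm (avg n h - avg M h)"
        using norm_triangle_ineq4[of "avg m h - avg M h" "avg n h - avg M h"] by simp
      ultimately have "norm (avg m h - avg n h) \<le> 2*e/3" by linarith
      then show "dist (avg m h) (avg n h) < e" using \<open>e > 0\<close> by (simp add: dist_norm)
    qed
  qed
  then show ?thesis by (simp add: Cauchy_convergent_iff)
qed

lemma ucyl_tendsto: assumes "ucyl h" shows "(\<lambda>m. avg m h) \<longlonglongrightarrow> haar_integral s h"
  using ucyl_conv[OF assms] by (simp add: haar_eq convergent_LIMSEQ_iff)

lemma haar_unique: "(\<lambda>m. avg m h) \<longlonglongrightarrow> L \<Longrightarrow> haar_integral s h = L"
  by (simp add: haar_eq limI)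

lemma ucyl_add: assumes "ucyl f" "ucyl g" shows "ucyl (\<lambda>x. f x + g x)"
  unfolding ucyl_def
proof (intro allI impI)
  fix e :: real assume e: "e > 0"
  obtain M1 where M1: "\<forall>x\<in>odometer s. \<forall>y\<in>odometer s. x M1 = y M1 \<longrightarrow> norm (f x - f y) < e/2"
    using ucylD[OF assms(1), of "e/2"] e by auto
  obtain M2 where M2: "\<forall>x\<in>odometer s. \<forall>y\<in>odometer s. x M2 = y M2 \<longrightarrow> norm (g x - g y) < e/2"
    using ucylD[OF assms(2), of "e/2"] e by auto
  show "\<exists>M. \<forall>x\<in>odometer s. \<forall>y\<in>odometer s. x M = y M \<longrightarrow> norm (f x + g x - (f y + g y)) < e"
  proof (intro exI[of _ "max M1 M2"] ballI impI)
    fix x y assume xy: "x \<in> odometer s" "y \<in> odometer s" "x (max M1 M2) = y (max M1 M2)"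
    have "x M1 = y M1" "x M2 = y M2" using ucyl_mono[OF xy] by auto
    then have "norm (f x - f y) < e/2" "norm (g x - g y) < e/2" using M1 M2 xy by auto
    moreover have "norm (f x + g x - (f y + g y)) \<le> norm (f x - f y) + norm (g x - g y)"
      by (metis add_diff_add norm_triangle_ineq)
    ultimately show "norm (f x + g x - (f y + g y)) < e" by linarith
  qed
qed

lemma ucyl_cmult: assumes "ucyl f" shows "ucyl (\<lambda>x. c * f x)"
  unfolding ucyl_def
proof (intro allI impI)
  fix e :: real assume e: "e > 0"
  have cp: "norm c + 1 > 0" using norm_ge_zero[of c] by linarith
  have p: "e / (norm c + 1) > 0" using e norm_ge_zero[of c] by (intro divide_pos_pos) linarith+
  obtain M where M: "\<forall>x\<in>odometer s. \<forall>y\<in>odometer s. x M = y M \<longrightarrow> norm (f x - f y) < e / (norm c + 1)"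
    using ucylD[OF assms p] by blast
  show "\<exists>M. \<forall>x\<in>odometer s. \<forall>y\<in>odometer s. x M = y M \<longrightarrow> norm (c * f x - c * f y) < e"
  proof (intro exI[of _ M] ballI impI)
    fix x y assume xy: "x \<in> odometer s" "y \<in> odometer s" "x M = y M"
    then have n: "norm (f x - f y) < e / (norm c + 1)" using M by auto
    have "norm (c * f x - c * f y) = norm c * norm (f x - f y)"
      by (simp add: norm_mult[symmetric] right_diff_distrib)
    also have "\<dots> \<le> (norm c + 1) * norm (f x - f y)" by (simp add: mult_right_mono)
    also have "\<dots> < (norm c + 1) * (e / (norm c + 1))"
      using n cp by (intro mult_strict_left_mono) auto
    also have "\<dots> = e" using cp by simp
    finally show "norm (c * f x - c * f y) < e" .
  qed
qed

lemma ucyl_diff: assumes "ucyl f" "ucyl g" shows "ucyl (\<lambda>x. f x - g x)"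
  using ucyl_add[OF assms(1) ucyl_cmult[OF assms(2), of "-1"]] by simp

lemma ucyl_const: "ucyl (\<lambda>x. c)"
  unfolding ucyl_def by auto

lemma ucyl_phi: assumes "ucyl g" shows "ucyl (\<lambda>x. g (odo_phi s x))"
  unfolding ucyl_def
proof (intro allI impI)
  fix e :: real assume e: "e > 0"
  obtain M where M: "\<forall>x\<in>odometer s. \<forall>y\<in>odometer s. x M = y M \<longrightarrow> norm (g x - g y) < e"
    using ucylD[OF assms e] by auto
  show "\<exists>M. \<forall>x\<in>odometer s. \<forall>y\<in>odometer s. x M = y M \<longrightarrow> norm (g (odo_phi s x) - g (odo_phi s y)) < e"
    using M odo_phi_in by (intro exI[of _ M]) (simp add: odo_phi_at)
qed

lemma haar_lin: assumes "ucyl f" "ucyl g"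
  shows "haar_integral s (\<lambda>x. f x + c * g x) = haar_integral s f + c * haar_integral s g"
proof (rule haar_unique)
  have "(\<lambda>m. avg m f + c * avg m g) \<longlonglongrightarrow> haar_integral s f + c * haar_integral s g"
    by (intro tendsto_intros ucyl_tendsto assms)
  then show "(\<lambda>m. avg m (\<lambda>x. f x + c * g x)) \<longlonglongrightarrow> haar_integral s f + c * haar_integral s g"
    by (simp add: avg_add avg_cmult)
qed


definition lev :: "complex \<Rightarrow> nat" where
  "lev z = (LEAST m. z ^ s m = 1)"

lemma lev_pow: "z \<in> dual_odometer s \<Longrightarrow> z ^ s (lev z) = 1"
  unfolding lev_def dual_odometer_def by (rule LeastI_ex) simp

lemma lev_le: "z ^ s m = 1 \<Longrightarrow> lev z \<le> m"
  unfolding lev_def by (rule Least_le)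

lemma pow_s_up: assumes "z ^ s m = 1" "m \<le> n" shows "z ^ s n = (1::complex)"
proof -
  obtain q where "s n = s m * q" using sdvd[OF assms(2)] by (auto simp: dvd_def)
  then show ?thesis using assms(1) by (simp add: power_mult)
qed

lemma pow_mod_root: assumes "z ^ k = (1::complex)" shows "z ^ n = z ^ (n mod k)"
proof -
  have "z ^ n = z ^ (k * (n div k) + n mod k)" by (simp only: mult_div_mod_eq)
  also have "\<dots> = z ^ (n mod k)" by (simp only: power_add power_mult assms power_one mult_1)
  finally show ?thesis .
qed

lemma char_at: assumes x: "x \<in> odometer s" and z: "z ^ s m = 1"
  shows "odo_char s z x = z ^ nat (x m)"
proof -
  define l where "l = lev z"
  have lm: "l \<le> m" unfolding l_def using lev_le[OF z] .
  have zl: "z ^ s l = 1" unfolding l_def using lev_pow z by (auto simp: dual_odometer_def)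
  have "x l = x m mod int (s l)" using odo_compat[OF x lm] .
  moreover have "0 \<le> x m" using odoD[OF x] by blast
  ultimately have "nat (x l) = nat (x m) mod s l"
    using spos[of l] by (simp add: nat_mod_distrib)
  then have "odo_char s z x = z ^ (nat (x m) mod s l)"
    by (simp add: odo_char_def l_def lev_def)
  also have "\<dots> = z ^ nat (x m)" by (rule pow_mod_root[OF zl, symmetric])
  finally show ?thesis .
qed

lemma char_of_int: assumes "z \<in> dual_odometer s" shows "odo_char s z (odo_of_int s (int k)) = z ^ k"
proof -
  have zl: "z ^ s (lev z) = 1" using lev_pow[OF assms] .
  have "odo_char s z (odo_of_int s (int k)) = z ^ nat (int k mod int (s (lev z)))"
    using char_at[OF odo_of_int_in zl] by (simp add: odo_of_int_at)
  also have "\<dots> = z ^ (k mod s (lev z))" by (simp add: zmod_int[symmetric])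
  also have "\<dots> = z ^ k" by (rule pow_mod_root[OF zl, symmetric])
  finally show ?thesis .
qed

lemma norm_dual: assumes "z \<in> dual_odometer s" shows "norm z = 1"
proof -
  obtain m where "z ^ s m = 1" using assms by (auto simp: dual_odometer_def)
  then show ?thesis using power_eq_1_iff[of z "s m"] spos[of m] by auto
qed

lemma char_norm: assumes "z \<in> dual_odometer s" "x \<in> odometer s" shows "norm (odo_char s z x) = 1"
proof -
  have "odo_char s z x = z ^ nat (x (lev z))" using char_at[OF assms(2) lev_pow[OF assms(1)]] .
  then show ?thesis using norm_dual[OF assms(1)] by (simp add: norm_power)
qed

lemma cnj_pow_iff: "(cnj z ^ n = 1) = (z ^ n = 1)"
  by (metis complex_cnj_one_iff complex_cnj_power)

lemma cnj_dual: "z \<in> dual_odometer s \<Longrightarrow> cnj z \<in> dual_odometer s"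
  by (simp add: dual_odometer_def cnj_pow_iff)

lemma char_cnj: "odo_char s (cnj z) x = cnj (odo_char s z x)"
  by (simp add: odo_char_def cnj_pow_iff complex_cnj_power)

lemma char_one: "odo_char s 1 x = 1"
  by (simp add: odo_char_def)

lemma char_phi: assumes x: "x \<in> odometer s" and z: "z \<in> dual_odometer s"
  shows "odo_char s z (odo_phi s x) = z * odo_char s z x"
proof -
  define l where "l = lev z"
  have zl: "z ^ s l = 1" unfolding l_def using lev_pow[OF z] .
  have x0: "0 \<le> x l" using odoD[OF x] by blast
  have "nat (odo_phi s x l) = (nat (x l) + 1) mod s l"
    using x0 spos[of l] by (simp add: odo_phi_at nat_mod_distrib nat_add_distrib)
  then have "odo_char s z (odo_phi s x) = z ^ ((nat (x l) + 1) mod s l)"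
    using char_at[OF odo_phi_in[OF x] zl] by simp
  also have "\<dots> = z ^ (nat (x l) + 1)" by (rule pow_mod_root[OF zl, symmetric])
  also have "\<dots> = z * odo_char s z x" using char_at[OF x zl] by simp
  finally show ?thesis .
qed

lemma ucyl_char: assumes z: "z \<in> dual_odometer s" and h: "ucyl h"
  shows "ucyl (\<lambda>x. h x * odo_char s z x)"
  unfolding ucyl_def
proof (intro allI impI)
  fix e :: real assume e: "e > 0"
  obtain M where M: "\<forall>x\<in>odometer s. \<forall>y\<in>odometer s. x M = y M \<longrightarrow> norm (h x - h y) < e"
    using ucylD[OF h e] by blast
  define M' where "M' = max M (lev z)"
  have zM: "z ^ s M' = 1" using pow_s_up[OF lev_pow[OF z]] by (simp add: M'_def)
  show "\<exists>M. \<forall>x\<in>odometer s. \<forall>y\<in>odometer s. x M = y M \<longrightarrow> norm (h x * odo_char s z x - h y * odo_char s z y) < e"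
  proof (intro exI[of _ M'] ballI impI)
    fix x y assume xy: "x \<in> odometer s" "y \<in> odometer s" "x M' = y M'"
    have "x M = y M" using ucyl_mono[OF xy] by (simp add: M'_def)
    then have n: "norm (h x - h y) < e" using M xy by blast
    have c: "odo_char s z x = odo_char s z y" using char_at[OF xy(1) zM] char_at[OF xy(2) zM] xy(3) by simp
    have "norm (h x * odo_char s z x - h y * odo_char s z y) = norm ((h x - h y) * odo_char s z x)"
      by (simp add: c left_diff_distrib)
    also have "\<dots> = norm (h x - h y)" using char_norm[OF z xy(1)] by (simp add: norm_mult)
    finally show "norm (h x * odo_char s z x - h y * odo_char s z y) < e" using n by simp
  qed
qed

lemma orth: assumes z: "z \<in> dual_odometer s" and w: "w \<in> dual_odometer s"
  and m: "lev z \<le> m" "lev w \<le> m"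
  shows "avg m (\<lambda>x. odo_char s z x * odo_char s (cnj w) x) = (if z = w then 1 else 0)"
proof -
  define u where "u = z * cnj w"
  have zm: "z ^ s m = 1" using pow_s_up[OF lev_pow[OF z] m(1)] .
  have wm: "w ^ s m = 1" using pow_s_up[OF lev_pow[OF w] m(2)] .
  have um: "u ^ s m = 1" unfolding u_def using cnj_pow_iff[of w "s m"] by (simp add: power_mult_distrib zm wm)
  have wn: "cnj w * w = 1"
    using norm_dual[OF w] complex_norm_square[of w] by (simp add: mult.commute)
  have sum: "(\<Sum>k<s m. odo_char s z (odo_of_int s (int k)) * odo_char s (cnj w) (odo_of_int s (int k))) = (\<Sum>k<s m. u ^ k)"
    by (simp add: char_of_int z cnj_dual[OF w] u_def power_mult_distrib)
  have av: "avg m (\<lambda>x. odo_char s z x * odo_char s (cnj w) x) = (\<Sum>k<s m. u ^ k) / of_nat (s m)"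
    by (simp only: avg_def sum)
  show ?thesis
  proof (cases "z = w")
    case True
    then have "u = 1" unfolding u_def using wn by (simp add: mult.commute)
    then show ?thesis unfolding av using True spos[of m] by simp
  next
    case False
    have "u \<noteq> 1"
    proof
      assume "u = 1"
      then have "z * (cnj w * w) = w" unfolding u_def by (metis mult.assoc mult_1)
      then show False using wn False by simp
    qed
    then have "(\<Sum>k<s m. u ^ k) = 0" using um by (simp add: sum_gp_strict)
    then show ?thesis unfolding av using False by simp
  qed
qed

lemma fourier_tendsto: assumes "z \<in> dual_odometer s" "ucyl h"
  shows "(\<lambda>m. avg m (\<lambda>x. h x * odo_char s (cnj z) x)) \<longlonglongrightarrow> fourier_coeff s h z"
  unfolding fourier_coeff_def
  by (intro ucyl_tendsto ucyl_char cnj_dual assms)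


lemma avg_cong: "(\<And>x. x \<in> odometer s \<Longrightarrow> f x = g x) \<Longrightarrow> avg m f = avg m g"
  unfolding avg_def using odo_of_int_in by simp

lemma tail_small:
  fixes n :: "complex \<Rightarrow> real"
  assumes n: "n summable_on dual_odometer s" and e: "e > 0"
  shows "\<exists>F. finite F \<and> F \<subseteq> dual_odometer s \<and>
           (\<forall>Y. finite Y \<and> F \<subseteq> Y \<and> Y \<subseteq> dual_odometer s \<longrightarrow> infsum n (dual_odometer s - Y) < e)"
proof -
  have "\<forall>\<^sub>F Y in finite_subsets_at_top (dual_odometer s). dist (sum n Y) (infsum n (dual_odometer s)) < e"
    using tendstoD[OF infsum_tendsto[OF n] e] .
  then have "\<exists>X. finite X \<and> X \<subseteq> dual_odometer s \<and> (\<forall>Y. finite Y \<and> X \<subseteq> Y \<and> Y \<subseteq> dual_odometer s \<longrightarrow> dist (sum n Y) (infsum n (dual_odometer s)) < e)"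
    unfolding eventually_finite_subsets_at_top .
  then obtain X where X: "finite X" "X \<subseteq> dual_odometer s"
    and X3: "\<forall>Y. finite Y \<and> X \<subseteq> Y \<and> Y \<subseteq> dual_odometer s \<longrightarrow> dist (sum n Y) (infsum n (dual_odometer s)) < e"
    by (elim exE conjE)
  have "infsum n (dual_odometer s - Y) < e" if Y: "finite Y" "X \<subseteq> Y" "Y \<subseteq> dual_odometer s" for Y
  proof -
    have sY: "n summable_on Y" using Y(1) by simp
    have sD: "n summable_on (dual_odometer s - Y)" by (rule summable_on_subset[OF n Diff_subset])
    have "infsum n (dual_odometer s) = infsum n (Y \<union> (dual_odometer s - Y))" using Y(3)
      by (simp add: Un_absorb1)
    also have "\<dots> = infsum n Y + infsum n (dual_odometer s - Y)"
      by (rule infsum_Un_disjoint[OF sY sD]) auto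
    finally have "infsum n (dual_odometer s - Y) = infsum n (dual_odometer s) - sum n Y"
      using Y(1) by simp
    moreover have "dist (sum n Y) (infsum n (dual_odometer s)) < e" using X3 Y by simp
    ultimately show ?thesis by (simp add: dist_real_def)
  qed
  note tl = this
  show ?thesis
    apply (intro exI[of _ X] conjI X(1) X(2) allI impI)
    apply (rule tl)
    by auto
qed

definition ser :: "(complex \<Rightarrow> complex) \<Rightarrow> (nat \<Rightarrow> int) \<Rightarrow> complex" where
  "ser c x = infsum (\<lambda>z. c z * odo_char s z x) (dual_odometer s)"

lemma ser_abs:
  assumes c: "(\<lambda>z. norm (c z)) summable_on dual_odometer s" and x: "x \<in> odometer s"
    and A: "A \<subseteq> dual_odometer s"
  shows "(\<lambda>z. norm (c z * odo_char s z x)) summable_on A"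
proof -
  have "(\<lambda>z. norm (c z)) summable_on A" using summable_on_subset[OF c A] .
  moreover have "norm (c z * odo_char s z x) = norm (c z)" if "z \<in> A" for z
    using char_norm[of z x] that A x by (auto simp: norm_mult)
  moreover have "(\<lambda>z. norm (c z * odo_char s z x)) summable_on A \<longleftrightarrow> (\<lambda>z. norm (c z)) summable_on A"
    by (rule summable_on_cong) (use calculation(2) in blast)
  ultimately show ?thesis by blast
qed

lemma ser_split:
  assumes c: "(\<lambda>z. norm (c z)) summable_on dual_odometer s" and x: "x \<in> odometer s"
    and Y: "finite Y" "Y \<subseteq> dual_odometer s"
  shows "ser c x = (\<Sum>z\<in>Y. c z * odo_char s z x) + infsum (\<lambda>z. c z * odo_char s z x) (dual_odometer s - Y)"
    and "norm (infsum (\<lambda>z. c z * odo_char s z x) (dual_odometer s - Y)) \<le> infsum (\<lambda>z. norm (c z)) (dual_odometer s - Y)"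
proof -
  have sD: "(\<lambda>z. c z * odo_char s z x) summable_on (dual_odometer s - Y)"
    using abs_summable_summable[OF ser_abs[OF c x]] by blast
  have sY: "(\<lambda>z. c z * odo_char s z x) summable_on Y" using Y(1) by simp
  have "ser c x = infsum (\<lambda>z. c z * odo_char s z x) (Y \<union> (dual_odometer s - Y))"
    unfolding ser_def using Y(2) by (simp add: Un_absorb1)
  also have "\<dots> = infsum (\<lambda>z. c z * odo_char s z x) Y + infsum (\<lambda>z. c z * odo_char s z x) (dual_odometer s - Y)"
    by (rule infsum_Un_disjoint[OF sY sD]) auto
  finally show "ser c x = (\<Sum>z\<in>Y. c z * odo_char s z x) + infsum (\<lambda>z. c z * odo_char s z x) (dual_odometer s - Y)"
    using Y(1) by simp
  have "norm (infsum (\<lambda>z. c z * odo_char s z x) (dual_odometer s - Y)) \<le> infsum (\<lambda>z. norm (c z * odo_char s z x)) (dual_odometer s - Y)"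
    by (rule norm_infsum_bound[OF ser_abs[OF c x]]) auto
  also have "\<dots> = infsum (\<lambda>z. norm (c z)) (dual_odometer s - Y)"
    using char_norm x by (intro infsum_cong) (auto simp: norm_mult)
  finally show "norm (infsum (\<lambda>z. c z * odo_char s z x) (dual_odometer s - Y)) \<le> infsum (\<lambda>z. norm (c z)) (dual_odometer s - Y)" .
qed

lemma ucyl_ser: assumes c: "(\<lambda>z. norm (c z)) summable_on dual_odometer s" shows "ucyl (ser c)"
  unfolding ucyl_def
proof (intro allI impI)
  fix e :: real assume e: "e > 0"
  obtain F where F: "finite F" "F \<subseteq> dual_odometer s"
    "\<And>Y. finite Y \<Longrightarrow> F \<subseteq> Y \<Longrightarrow> Y \<subseteq> dual_odometer s \<Longrightarrow> infsum (\<lambda>z. norm (c z)) (dual_odometer s - Y) < e/3"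
    using tail_small[OF c, of "e/3"] e by auto
  define M where "M = Max (insert 0 (lev ` F))"
  have zM: "z ^ s M = 1" if "z \<in> F" for z
  proof -
    have "lev z \<le> M" unfolding M_def using F(1) that by simp
    then show ?thesis using pow_s_up[OF lev_pow] F(2) that by blast
  qed
  show "\<exists>M. \<forall>x\<in>odometer s. \<forall>y\<in>odometer s. x M = y M \<longrightarrow> norm (ser c x - ser c y) < e"
  proof (intro exI[of _ M] ballI impI)
    fix x y assume xy: "x \<in> odometer s" "y \<in> odometer s" "x M = y M"
    have eqF: "(\<Sum>z\<in>F. c z * odo_char s z x) = (\<Sum>z\<in>F. c z * odo_char s z y)"
      using char_at[OF xy(1) zM] char_at[OF xy(2) zM] xy(3) by (intro sum.cong) auto
    define tx where "tx = infsum (\<lambda>z. c z * odo_char s z x) (dual_odometer s - F)"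
    define ty where "ty = infsum (\<lambda>z. c z * odo_char s z y) (dual_odometer s - F)"
    have eqd: "ser c x - ser c y = tx - ty"
      using ser_split(1)[OF c xy(1) F(1,2)] ser_split(1)[OF c xy(2) F(1,2)] eqF
      unfolding tx_def ty_def by simp
    moreover have "norm tx < e/3" "norm ty < e/3"
      using ser_split(2)[OF c xy(1) F(1,2)] ser_split(2)[OF c xy(2) F(1,2)] F(3)[OF F(1) order_refl F(2)]
      unfolding tx_def ty_def by linarith+
    moreover have "norm (tx - ty) \<le> norm tx + norm ty" by (rule norm_triangle_ineq4)
    ultimately show "norm (ser c x - ser c y) < e" unfolding eqd using e by linarith
  qed
qed

lemma fourier_ser: assumes c: "(\<lambda>z. norm (c z)) summable_on dual_odometer s"
  and w: "w \<in> dual_odometer s"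
  shows "fourier_coeff s (ser c) w = c w"
  unfolding fourier_coeff_def
proof (rule haar_unique, rule LIMSEQ_I)
  fix r :: real assume r: "r > 0"
  obtain F where F: "finite F" "F \<subseteq> dual_odometer s"
    "\<And>Y. finite Y \<Longrightarrow> F \<subseteq> Y \<Longrightarrow> Y \<subseteq> dual_odometer s \<Longrightarrow> infsum (\<lambda>z. norm (c z)) (dual_odometer s - Y) < r/2"
    using tail_small[OF c, of "r/2"] r by auto
  define Y where "Y = insert w F"
  have Y: "finite Y" "Y \<subseteq> dual_odometer s" "F \<subseteq> Y" "w \<in> Y" using F w by (auto simp: Y_def)
  have tl: "infsum (\<lambda>z. norm (c z)) (dual_odometer s - Y) < r/2" using F(3)[OF Y(1,3,2)] .
  define M where "M = Max (lev ` Y)"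
  show "\<exists>no. \<forall>m\<ge>no. norm (avg m (\<lambda>x. ser c x * odo_char s (cnj w) x) - c w) < r"
  proof (intro exI[of _ M] allI impI)
    fix m assume m: "M \<le> m"
    have levY: "lev z \<le> m" if "z \<in> Y" for z
      using m Y(1) that unfolding M_def by (meson Max_ge finite_imageI image_eqI order_trans)
    define T where "T x = infsum (\<lambda>z. c z * odo_char s z x) (dual_odometer s - Y)" for x
    have "avg m (\<lambda>x. ser c x * odo_char s (cnj w) x)
        = avg m (\<lambda>x. (\<Sum>z\<in>Y. c z * (odo_char s z x * odo_char s (cnj w) x)) + T x * odo_char s (cnj w) x)"
      by (rule avg_cong) (simp add: ser_split(1)[OF c _ Y(1,2)] T_def distrib_right sum_distrib_right mult.assoc)
    also have "\<dots> = (\<Sum>z\<in>Y. c z * avg m (\<lambda>x. odo_char s z x * odo_char s (cnj w) x)) + avg m (\<lambda>x. T x * odo_char s (cnj w) x)"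
      by (simp add: avg_add avg_sum avg_cmult)
    also have "(\<Sum>z\<in>Y. c z * avg m (\<lambda>x. odo_char s z x * odo_char s (cnj w) x)) = (\<Sum>z\<in>Y. c z * (if z = w then 1 else 0))"
      using Y(2) levY Y(4) w by (intro sum.cong refl) (simp add: orth subset_iff)
    also have "\<dots> = c w" using Y(1,4) by (simp add: if_distrib sum.delta cong: if_cong)
    finally have eq: "avg m (\<lambda>x. ser c x * odo_char s (cnj w) x) - c w = avg m (\<lambda>x. T x * odo_char s (cnj w) x)"
      by simp
    have "norm (avg m (\<lambda>x. T x * odo_char s (cnj w) x)) \<le> infsum (\<lambda>z. norm (c z)) (dual_odometer s - Y)"
    proof (rule avg_bound)
      fix x assume x: "x \<in> odometer s"
      have "norm (T x * odo_char s (cnj w) x) = norm (T x)"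
        using char_norm[OF cnj_dual[OF w] x] by (simp add: norm_mult)
      also have "\<dots> \<le> infsum (\<lambda>z. norm (c z)) (dual_odometer s - Y)"
        unfolding T_def by (rule ser_split(2)[OF c x Y(1,2)])
      finally show "norm (T x * odo_char s (cnj w) x) \<le> infsum (\<lambda>z. norm (c z)) (dual_odometer s - Y)" .
    qed
    then show "norm (avg m (\<lambda>x. ser c x * odo_char s (cnj w) x) - c w) < r"
      unfolding eq using tl r by linarith
  qed
qed


lemma omega_ex: assumes "0 < n" shows "\<exists>\<omega>::complex. \<forall>t. \<omega> ^ t = 1 \<longleftrightarrow> n dvd t"
proof -
  define \<omega> where "\<omega> = exp (2 * of_real pi * \<i> * of_nat 1 / of_nat n)"
  have "\<omega> ^ t = exp (of_nat t * (2 * of_real pi * \<i> * of_nat 1 / of_nat n))" for t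
    by (simp only: \<omega>_def exp_of_nat_mult)
  also have "exp (of_nat t * (2 * of_real pi * \<i> * of_nat 1 / of_nat n)) = exp (2 * of_real pi * \<i> * of_nat t / of_nat n)" for t
    by (rule arg_cong[where f=exp]) simp
  finally have "\<omega> ^ t = 1 \<longleftrightarrow> n dvd t" for t
    using complex_root_unity_eq_1[of n t] assms by simp
  then show ?thesis by blast
qed

lemma dvd_shift: assumes "a < (n::nat)" shows "n dvd (k + (n - a)) \<longleftrightarrow> k mod n = a"
proof -
  define r where "r = k mod n"
  have r: "r < n" using assms unfolding r_def by simp
  have "n dvd (k + (n - a)) \<longleftrightarrow> (r + (n - a)) mod n = 0"
    unfolding r_def by (simp add: dvd_eq_mod_eq_0 mod_add_left_eq)
  also have "\<dots> \<longleftrightarrow> r = a"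
  proof (cases "a \<le> r")
    case True
    then have "r + (n - a) = (r - a) + n" using assms by simp
    then have "(r + (n - a)) mod n = ((r - a) + n) mod n" by (simp only:)
    also have "\<dots> = r - a" using r by simp
    finally have "(r + (n - a)) mod n = r - a" .
    then show ?thesis using True by simp
  next
    case False
    then have "(r + (n - a)) mod n = r + (n - a)" using assms by (intro mod_less) simp
    then show ?thesis using False assms by simp
  qed
  finally show ?thesis unfolding r_def .
qed

lemma uniq:
  assumes h: "ucyl h" and fz: "\<forall>z\<in>dual_odometer s. fourier_coeff s h z = 0" and x0: "x0 \<in> odometer s"
  shows "h x0 = 0"
proof -
  have "norm (h x0) \<le> e" if e: "e > 0" for e
  proof -
    obtain M where M: "\<forall>x\<in>odometer s. \<forall>y\<in>odometer s. x M = y M \<longrightarrow> norm (h x - h y) < e"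
      using ucylD[OF h e] by blast
    define n where "n = s M"
    have n0: "0 < n" unfolding n_def by (rule spos)
    define a where "a = nat (x0 M)"
    have a: "a < n" "int a = x0 M" using odoD[OF x0, of M] unfolding a_def n_def by auto
    define b where "b = n - a"
    obtain \<omega> :: complex where om: "\<And>t. \<omega> ^ t = 1 \<longleftrightarrow> n dvd t" using omega_ex[OF n0] by blast
    have zd: "\<omega> ^ j \<in> dual_odometer s" for j
    proof -
      have "(\<omega> ^ j) ^ s M = 1" unfolding power_mult[symmetric] using om[of "j * s M"] by (simp add: n_def)
      then show ?thesis by (auto simp: dual_odometer_def)
    qed
    have lim0: "(\<lambda>m. avg m (\<lambda>x. h x * odo_char s (\<omega> ^ j) x)) \<longlonglongrightarrow> 0" for j
    proof -
      have "(\<lambda>m. avg m (\<lambda>x. h x * odo_char s (cnj (cnj (\<omega> ^ j))) x)) \<longlonglongrightarrow> fourier_coeff s h (cnj (\<omega> ^ j))"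
        by (intro fourier_tendsto cnj_dual zd h)
      then show ?thesis using fz cnj_dual[OF zd] by simp
    qed
    define C where "C m = (\<Sum>j<n. \<omega> ^ (j * b) * avg m (\<lambda>x. h x * odo_char s (\<omega> ^ j) x))" for m
    have C0: "C \<longlonglongrightarrow> 0" unfolding C_def
      by (intro tendsto_null_sum tendsto_mult_right_zero lim0)
    have inner: "(\<Sum>j<n. \<omega> ^ (j * b) * (\<omega> ^ j) ^ k) = (if k mod n = a then of_nat n else 0)" for k
    proof -
      define v where "v = \<omega> ^ (k + b)"
      have t: "\<omega> ^ (j * b) * (\<omega> ^ j) ^ k = v ^ j" for j
      proof -
        have "\<omega> ^ (j * b) * (\<omega> ^ j) ^ k = \<omega> ^ (j * b + j * k)" by (simp add: power_add power_mult)
        also have "j * b + j * k = (k + b) * j" by (simp add: algebra_simps)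
        finally show ?thesis unfolding v_def by (simp add: power_mult)
      qed
      have vn: "v ^ n = 1" unfolding v_def power_mult[symmetric] using om[of "(k + b) * n"] by simp
      have v1: "v = 1 \<longleftrightarrow> k mod n = a" unfolding v_def om b_def using dvd_shift[OF a(1)] by simp
      show ?thesis unfolding t using vn v1 by (simp add: sum_gp_strict)
    qed
    have close: "norm (C m - h x0) \<le> e" if m: "M \<le> m" for m
    proof -
      have "C m = avg m (\<lambda>x. \<Sum>j<n. \<omega> ^ (j * b) * (h x * odo_char s (\<omega> ^ j) x))"
        unfolding C_def by (simp add: avg_sum avg_cmult)
      also have "\<dots> = (\<Sum>k<s m. h (odo_of_int s (int k)) * (if k mod n = a then of_nat n else 0)) / of_nat (s m)"
        unfolding avg_def
        by (simp add: char_of_int[OF zd] inner[symmetric] sum_distrib_left mult.assoc mult.left_commute)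
      finally have Cm: "C m = (\<Sum>k<s m. h (odo_of_int s (int k)) * (if k mod n = a then of_nat n else 0)) / of_nat (s m)" .
      obtain q where q: "s m = q * n" using sdvd[OF m] unfolding n_def by (auto simp: dvd_def mult.commute)
      have cnt: "(\<Sum>k<s m. (if k mod n = a then of_nat n else 0 :: complex)) = of_nat (s m)"
      proof -
        have "(\<Sum>k<q * n. (\<lambda>j. if j = a then of_nat n else 0 :: complex) (k mod n)) = of_nat q * (\<Sum>j<n. (if j = a then of_nat n else 0))"
          by (rule sum_mod_rep[OF n0])
        also have "\<dots> = of_nat (s m)" using a(1) q by simp
        finally show ?thesis using q by simp
      qed
      have "C m - h x0 = (\<Sum>k<s m. (h (odo_of_int s (int k)) - h x0) * (if k mod n = a then of_nat n else 0)) / of_nat (s m)"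
      proof -
        have "h x0 = h x0 * (\<Sum>k<s m. (if k mod n = a then of_nat n else 0 :: complex)) / of_nat (s m)"
          using spos[of m] unfolding cnt by simp
        then show ?thesis unfolding Cm
          by (simp add: sum_distrib_left left_diff_distrib sum_subtractf diff_divide_distrib)
      qed
      moreover have "norm (\<Sum>k<s m. (h (odo_of_int s (int k)) - h x0) * (if k mod n = a then of_nat n else 0))
          \<le> (\<Sum>k<s m. e * (if k mod n = a then of_nat n else 0))"
      proof (rule sum_norm_le)
        fix k assume "k \<in> {..<s m}"
        show "norm ((h (odo_of_int s (int k)) - h x0) * (if k mod n = a then of_nat n else 0)) \<le> e * (if k mod n = a then of_nat n else 0)"
        proof (cases "k mod n = a")
          case True
          have "odo_of_int s (int k) M = x0 M"
            using True a(2) by (simp add: odo_of_int_at n_def[symmetric] zmod_int[symmetric])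
          then have "norm (h (odo_of_int s (int k)) - h x0) < e" using M odo_of_int_in x0 by blast
          then show ?thesis using True by (simp add: norm_mult mult_right_mono less_imp_le)
        qed simp
      qed
      moreover have "(\<Sum>k<s m. e * (if k mod n = a then of_nat n else 0 :: real)) = e * real (s m)"
      proof -
        have "(\<Sum>k<s m. (if k mod n = a then of_nat n else 0 :: real)) = real (s m)"
        proof -
          have "(\<Sum>k<q * n. (\<lambda>j. if j = a then of_nat n else 0 :: real) (k mod n)) = of_nat q * (\<Sum>j<n. (if j = a then of_nat n else 0))"
            by (rule sum_mod_rep[OF n0])
          also have "\<dots> = real (s m)" using a(1) q by simp
          finally show ?thesis using q by simp
        qed
        then show ?thesis by (simp add: sum_distrib_left[symmetric])
      qed
      ultimately show ?thesis using spos[of m] by (simp add: norm_divide divide_le_eq)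
    qed
    have "(\<lambda>m. norm (C m - h x0)) \<longlonglongrightarrow> norm (0 - h x0)"
      by (intro tendsto_intros C0)
    moreover have "eventually (\<lambda>m. norm (C m - h x0) \<le> e) sequentially"
      using close by (auto simp: eventually_sequentially)
    ultimately have "norm (0 - h x0) \<le> e" by (rule tendsto_upperbound) simp
    then show ?thesis by simp
  qed
  note le = this
  show ?thesis
  proof (rule ccontr)
    assume "h x0 \<noteq> 0"
    then have p: "norm (h x0) / 2 > 0" by simp
    have "norm (h x0) \<le> norm (h x0) / 2" by (rule le[OF p])
    then show False using p by simp
  qed
qed


lemma phi_avg: assumes z: "z \<in> dual_odometer s" and m: "lev z \<le> m"
  shows "avg m (\<lambda>x. g (odo_phi s x) * odo_char s (cnj z) x)
       = z * avg m (\<lambda>x. g x * odo_char s (cnj z) x) + z * (g (odo_of_int s (int (s m))) - g (odo_of_int s 0)) / of_nat (s m)"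
proof -
  define w where "w = cnj z"
  define N where "N = s m"
  define G where "G k = g (odo_of_int s (int k)) * w ^ k" for k
  have wd: "w \<in> dual_odometer s" unfolding w_def by (rule cnj_dual[OF z])
  have zw: "z * w = 1" unfolding w_def using norm_dual[OF z] complex_norm_square[of z] by simp
  have wN: "w ^ N = 1" unfolding w_def N_def cnj_pow_iff by (rule pow_s_up[OF lev_pow[OF z] m])
  have t: "g (odo_phi s (odo_of_int s (int k))) * odo_char s w (odo_of_int s (int k)) = z * G (Suc k)" for k
  proof -
    have "g (odo_phi s (odo_of_int s (int k))) * odo_char s w (odo_of_int s (int k)) = g (odo_of_int s (int (Suc k))) * w ^ k"
      by (simp add: odo_phi_of_int char_of_int[OF wd] add.commute)
    also have "\<dots> = g (odo_of_int s (int (Suc k))) * ((z * w) * w ^ k)" using zw by simp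
    also have "\<dots> = z * G (Suc k)" unfolding G_def by (simp add: ac_simps)
    finally show ?thesis .
  qed
  have "(\<Sum>k<N. g (odo_phi s (odo_of_int s (int k))) * odo_char s w (odo_of_int s (int k))) = z * (\<Sum>k<N. G (Suc k))"
    by (simp add: t sum_distrib_left)
  also have "(\<Sum>k<N. G (Suc k)) = (\<Sum>k<Suc N. G k) - G 0"
    using sum.lessThan_Suc_shift[of G N] by (simp only: add_diff_cancel_left')
  also have "\<dots> = (\<Sum>k<N. G k) + (g (odo_of_int s (int N)) - g (odo_of_int s 0))"
    by (simp add: G_def wN)
  finally have S: "(\<Sum>k<N. g (odo_phi s (odo_of_int s (int k))) * odo_char s w (odo_of_int s (int k)))
     = z * (\<Sum>k<N. G k) + z * (g (odo_of_int s (int N)) - g (odo_of_int s 0))"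
    by (simp add: distrib_left)
  have G2: "(\<Sum>k<N. g (odo_of_int s (int k)) * odo_char s w (odo_of_int s (int k))) = (\<Sum>k<N. G k)"
    by (simp add: G_def char_of_int[OF wd])
  show ?thesis
    unfolding avg_def w_def[symmetric] N_def[symmetric] S G2
    by (simp add: add_divide_distrib)
qed

lemma phi_tendsto: assumes z: "z \<in> dual_odometer s" and g: "ucyl g"
  shows "(\<lambda>m. avg m (\<lambda>x. g (odo_phi s x) * odo_char s (cnj z) x)) \<longlonglongrightarrow> z * fourier_coeff s g z"
proof -
  define D where "D m = z * (g (odo_of_int s (int (s m))) - g (odo_of_int s 0)) / of_nat (s m)" for m
  have D0: "D \<longlonglongrightarrow> 0"
  proof (rule LIMSEQ_I)
    fix r :: real assume r: "r > 0"
    obtain M where M: "\<forall>x\<in>odometer s. \<forall>y\<in>odometer s. x M = y M \<longrightarrow> norm (g x - g y) < r"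
      using ucylD[OF g r] by blast
    show "\<exists>no. \<forall>m\<ge>no. norm (D m - 0) < r"
    proof (intro exI[of _ M] allI impI)
      fix m assume m: "M \<le> m"
      have "odo_of_int s (int (s m)) M = odo_of_int s 0 M"
        using sdvd[OF m] by (simp add: odo_of_int_at)
      then have n: "norm (g (odo_of_int s (int (s m))) - g (odo_of_int s 0)) < r"
        using M odo_of_int_in by blast
      have "norm (D m) = norm (g (odo_of_int s (int (s m))) - g (odo_of_int s 0)) / real (s m)"
        unfolding D_def using norm_dual[OF z] by (simp add: norm_mult norm_divide)
      also have "\<dots> \<le> norm (g (odo_of_int s (int (s m))) - g (odo_of_int s 0))"
      proof -
        have "1 \<le> real (s m)" using spos[of m] by simp
        then show ?thesis using spos[of m] by (simp add: divide_le_eq mult_le_cancel_left1)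
      qed
      finally show "norm (D m - 0) < r" using n by simp
    qed
  qed
  have "(\<lambda>m. z * avg m (\<lambda>x. g x * odo_char s (cnj z) x) + D m) \<longlonglongrightarrow> z * fourier_coeff s g z + 0"
    by (intro tendsto_intros fourier_tendsto z g D0)
  moreover have "eventually (\<lambda>m. z * avg m (\<lambda>x. g x * odo_char s (cnj z) x) + D m = avg m (\<lambda>x. g (odo_phi s x) * odo_char s (cnj z) x)) sequentially"
    unfolding eventually_sequentially D_def by (intro exI[of _ "lev z"] allI impI) (simp add: phi_avg[OF z])
  ultimately show ?thesis by (simp add: tendsto_cong)
qed

lemma norm_pow_diff: assumes "norm (z::complex) = 1" shows "norm (1 - z ^ j) \<le> real j * norm (1 - z)"
proof (induction j)
  case 0 then show ?case by simp
next
  case (Suc j)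
  have "1 - z ^ Suc j = (1 - z ^ j) + z ^ j * (1 - z)" by (simp add: algebra_simps)
  then have "norm (1 - z ^ Suc j) \<le> norm (1 - z ^ j) + norm (z ^ j * (1 - z))" by (metis norm_triangle_ineq)
  also have "norm (z ^ j * (1 - z)) = norm (1 - z)" using assms by (simp add: norm_mult norm_power)
  finally show ?case using Suc by (simp add: algebra_simps)
qed

lemma root_order_props: assumes "z \<in> dual_odometer s" shows "0 < root_order z" "z ^ root_order z = 1"
proof -
  obtain m where "z ^ s m = 1" using assms by (auto simp: dual_odometer_def)
  then have ex: "\<exists>n. 0 < n \<and> z ^ n = 1" using spos[of m] by blast
  show "0 < root_order z" "z ^ root_order z = 1"
    using LeastI_ex[OF ex] unfolding root_order_def by auto
qed

lemma root_bound: assumes z: "z \<in> dual_odometer s" and z1: "z \<noteq> 1"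
  shows "1 \<le> real (root_order z) * norm (z - 1)"
proof -
  define n where "n = root_order z"
  have n0: "0 < n" and zn: "z ^ n = 1" using root_order_props[OF z] unfolding n_def by auto
  have "(\<Sum>j<n. z ^ j) = 0" using z1 zn by (simp add: sum_gp_strict)
  then have "(\<Sum>j<n. (1 - z ^ j)) = of_nat n" by (simp add: sum_subtractf)
  then have "real n = norm (\<Sum>j<n. (1 - z ^ j))" by (metis norm_of_nat)
  also have "\<dots> \<le> (\<Sum>j<n. real n * norm (1 - z))"
  proof (rule sum_norm_le)
    fix j assume "j \<in> {..<n}"
    then have "real j \<le> real n" by simp
    then have "real j * norm (1 - z) \<le> real n * norm (1 - z)" by (simp add: mult_right_mono)
    then show "norm (1 - z ^ j) \<le> real n * norm (1 - z)"
      using norm_pow_diff[OF norm_dual[OF z], of j] by linarith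
  qed
  also have "\<dots> = real n * (real n * norm (1 - z))" by simp
  finally have "real n * 1 \<le> real n * (real n * norm (1 - z))" by simp
  then have "1 \<le> real n * norm (1 - z)" using n0 by (simp add: mult_le_cancel_left_pos)
  then show ?thesis unfolding n_def by (simp add: norm_minus_commute)
qed

lemma poly_bound: assumes "good_length s lam"
  shows "\<exists>K P. 0 < K \<and> (\<forall>z\<in>dual_odometer s. real (root_order z) \<le> K * lam z ^ P)"
proof -
  obtain c \<alpha> where c: "0 < c" "0 < \<alpha>" and b: "\<And>z. z \<in> dual_odometer s \<Longrightarrow> c * real (root_order z) powr \<alpha> \<le> lam z"
    using assms unfolding good_length_def by blast
  have l1: "\<And>z. z \<in> dual_odometer s \<Longrightarrow> 1 \<le> lam z" using assms unfolding good_length_def by blast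
  define P where "P = nat \<lceil>1 / \<alpha>\<rceil>"
  define K where "K = (1 / c) powr (1 / \<alpha>)"
  have K: "0 < K" unfolding K_def using c by simp
  have "real (root_order z) \<le> K * lam z ^ P" if z: "z \<in> dual_odometer s" for z
  proof -
    define n where "n = real (root_order z)"
    have n0: "0 < n" unfolding n_def using root_order_props[OF z] by simp
    have "n powr \<alpha> \<le> lam z / c" using b[OF z] c unfolding n_def by (simp add: field_simps)
    then have "(n powr \<alpha>) powr (1/\<alpha>) \<le> (lam z / c) powr (1/\<alpha>)"
      using c n0 by (intro powr_mono2) auto
    moreover have "(n powr \<alpha>) powr (1/\<alpha>) = n" using c n0 by (simp add: powr_powr)
    moreover have "(lam z / c) powr (1/\<alpha>) = lam z powr (1/\<alpha>) * K"
      unfolding K_def using c l1[OF z] by (simp add: powr_divide powr_mult[symmetric] divide_inverse)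
    moreover have "lam z powr (1/\<alpha>) \<le> lam z powr (real P)"
      using l1[OF z] unfolding P_def by (intro powr_mono) (auto, linarith)
    moreover have "lam z powr (real P) = lam z ^ P" using l1[OF z] by (simp add: powr_realpow)
    ultimately have "n \<le> lam z ^ P * K" using K by (metis mult_right_mono less_imp_le order_trans)
    then show ?thesis unfolding n_def by (simp add: mult.commute)
  qed
  then show ?thesis using K by blast
qed

lemma fourier_const: assumes z: "z \<in> dual_odometer s"
  shows "fourier_coeff s (\<lambda>x. a) z = (if z = 1 then a else 0)"
  unfolding fourier_coeff_def
proof (rule haar_unique, rule tendsto_eventually)
  have l1: "lev 1 \<le> m" for m using lev_le[of 1 0] by simp
  have "avg m (\<lambda>x. a * odo_char s (cnj z) x) = (if z = 1 then a else 0)" if "lev z \<le> m" for m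
  proof -
    have "avg m (\<lambda>x. a * odo_char s (cnj z) x) = a * avg m (\<lambda>x. odo_char s 1 x * odo_char s (cnj z) x)"
      by (simp add: avg_cmult char_one)
    also have "\<dots> = a * (if 1 = z then 1 else 0)"
      using orth[of 1 z m] z that l1 by (simp add: dual_odometer_def)
    finally show ?thesis by auto
  qed
  then show "\<forall>\<^sub>F m in sequentially. avg m (\<lambda>x. a * odo_char s (cnj z) x) = (if z = 1 then a else 0)"
    unfolding eventually_sequentially by blast
qed

lemma haar_const: "haar_integral s (\<lambda>x. a) = a"
  by (rule haar_unique) (simp add: avg_def spos[THEN less_imp_neq, symmetric])


lemma cob_tendsto: assumes z: "z \<in> dual_odometer s" and g: "ucyl g"
  shows "(\<lambda>m. avg m (\<lambda>x. (g (odo_phi s x) - g x) * odo_char s (cnj z) x)) \<longlonglongrightarrow> (z - 1) * fourier_coeff s g z"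
proof -
  have "(\<lambda>m. avg m (\<lambda>x. g (odo_phi s x) * odo_char s (cnj z) x) - avg m (\<lambda>x. g x * odo_char s (cnj z) x))
        \<longlonglongrightarrow> z * fourier_coeff s g z - fourier_coeff s g z"
    by (intro tendsto_diff phi_tendsto fourier_tendsto z g)
  then show ?thesis by (simp add: left_diff_distrib avg_diff)
qed

lemma fourier_cob: assumes z: "z \<in> dual_odometer s" and g: "ucyl g"
  shows "fourier_coeff s (\<lambda>x. g (odo_phi s x) - g x) z = (z - 1) * fourier_coeff s g z"
  unfolding fourier_coeff_def by (rule haar_unique) (use cob_tendsto[OF z g] in \<open>simp add: fourier_coeff_def\<close>)

lemma one_dual: "1 \<in> dual_odometer s"
  by (simp add: dual_odometer_def)

lemma haar_cong: assumes "\<And>x. x \<in> odometer s \<Longrightarrow> f x = g x" shows "haar_integral s f = haar_integral s g"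
  unfolding haar_eq using avg_cong[OF assms] by simp

lemma fourier_one: "fourier_coeff s f 1 = haar_integral s f"
  by (simp add: fourier_coeff_def char_one)

end

theorem mainTheorem10:
  fixes s :: "nat \<Rightarrow> nat" and lam :: "complex \<Rightarrow> real"
  assumes "is_scale s" and "infinite_lcm s" and "good_length s lam"
  shows "(\<forall>g\<in>C_RD s lam. (\<lambda>x. g (odo_phi s x) - g x) \<in> C_RD s lam)
     \<and> (\<forall>f\<in>C_RD s lam. \<forall>g\<in>C_RD s lam. \<forall>c::complex.
          haar_integral s (\<lambda>x. f x + c * g x) = haar_integral s f + c * haar_integral s g)
     \<and> haar_integral s ` C_RD s lam = UNIV
     \<and> (\<forall>f\<in>C_RD s lam. haar_integral s f = 0 \<longleftrightarrow> f \<in> B1_RD s lam)"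
proof -
  interpret odo s using assms(1,2) by unfold_locales
  have crd_ucyl: "ucyl f" if "f \<in> C_RD s lam" for f
    using that cont_ucyl by (simp add: C_RD_def)
  have crd_sum: "(\<lambda>z. norm (fourier_coeff s f z) * lam z ^ N) summable_on dual_odometer s" if "f \<in> C_RD s lam" for f N
    using that by (simp add: C_RD_def)
  have lam1: "1 \<le> lam z" if "z \<in> dual_odometer s" for z
    using assms(3) that unfolding good_length_def by blast
  have P1: "(\<lambda>x. g (odo_phi s x) - g x) \<in> C_RD s lam" if g: "g \<in> C_RD s lam" for g
  proof -
    have u: "ucyl (\<lambda>x. g (odo_phi s x) - g x)" by (intro ucyl_diff ucyl_phi crd_ucyl g)
    have "(\<lambda>z. norm (fourier_coeff s (\<lambda>x. g (odo_phi s x) - g x) z) * lam z ^ N) summable_on dual_odometer s" for N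
    proof (rule summable_on_comparison_test)
      show "(\<lambda>z. 2 * (norm (fourier_coeff s g z) * lam z ^ N)) summable_on dual_odometer s"
        by (intro summable_on_cmult_right crd_sum g)
    next
      fix z assume z: "z \<in> dual_odometer s"
      have lp: "0 \<le> lam z ^ N" using lam1[OF z] by simp
      show "0 \<le> norm (fourier_coeff s (\<lambda>x. g (odo_phi s x) - g x) z) * lam z ^ N" using lp by simp
      have "norm (z - 1) \<le> 2"
        using norm_triangle_ineq4[of z 1] norm_dual[OF z] by simp
      then have "norm (z - 1) * norm (fourier_coeff s g z) \<le> 2 * norm (fourier_coeff s g z)"
        by (simp add: mult_right_mono)
      then have "norm (z - 1) * norm (fourier_coeff s g z) * lam z ^ N \<le> 2 * norm (fourier_coeff s g z) * lam z ^ N"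
        using lp by (simp add: mult_right_mono)
      then show "norm (fourier_coeff s (\<lambda>x. g (odo_phi s x) - g x) z) * lam z ^ N \<le> 2 * (norm (fourier_coeff s g z) * lam z ^ N)"
        using fourier_cob[OF z crd_ucyl[OF g]] by (simp add: norm_mult mult.assoc)
    qed
    then show ?thesis using ucyl_cont[OF u] by (simp add: C_RD_def)
  qed
  have P2: "haar_integral s (\<lambda>x. f x + c * g x) = haar_integral s f + c * haar_integral s g"
    if "f \<in> C_RD s lam" "g \<in> C_RD s lam" for f g c
    using haar_lin[OF crd_ucyl crd_ucyl] that by blast
  have P3: "haar_integral s ` C_RD s lam = UNIV"
  proof -
    have "a \<in> haar_integral s ` C_RD s lam" for a
    proof -
      have "(\<lambda>z. norm (fourier_coeff s (\<lambda>x. a) z) * lam z ^ N) summable_on dual_odometer s" for N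
      proof (rule finite_nonzero_values_imp_summable_on)
        have "{z \<in> dual_odometer s. norm (fourier_coeff s (\<lambda>x. a) z) * lam z ^ N \<noteq> 0} \<subseteq> {1}"
          using fourier_const by (auto split: if_splits)
        then show "finite {z \<in> dual_odometer s. norm (fourier_coeff s (\<lambda>x. a) z) * lam z ^ N \<noteq> 0}"
          by (rule finite_subset) simp
      qed
      then have "(\<lambda>x. a) \<in> C_RD s lam" by (simp add: C_RD_def)
      then show ?thesis using haar_const[of a] by (metis image_eqI)
    qed
    then show ?thesis by blast
  qed
  have P4a: "haar_integral s f = 0" if f: "f \<in> B1_RD s lam" for f
  proof -
    obtain g where g: "g \<in> C_RD s lam" "\<And>x. x \<in> odometer s \<Longrightarrow> f x = g (odo_phi s x) - g x"
      using f unfolding B1_RD_def by blast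
    have "haar_integral s f = haar_integral s (\<lambda>x. g (odo_phi s x) - g x)"
      using g(2) by (rule haar_cong)
    also have "\<dots> = fourier_coeff s (\<lambda>x. g (odo_phi s x) - g x) 1" by (simp add: fourier_one)
    also have "\<dots> = 0" using fourier_cob[OF one_dual crd_ucyl[OF g(1)]] by simp
    finally show ?thesis .
  qed
  have P4b: "f \<in> B1_RD s lam" if f: "f \<in> C_RD s lam" and f0: "haar_integral s f = 0" for f
  proof -
    obtain K P where K: "0 < K" "\<And>z. z \<in> dual_odometer s \<Longrightarrow> real (root_order z) \<le> K * lam z ^ P"
      using poly_bound[OF assms(3)] by blast
    define c where "c z = (if z = 1 then 0 else fourier_coeff s f z / (z - 1))" for z
    have cb: "norm (c z) \<le> K * lam z ^ P * norm (fourier_coeff s f z)" if z: "z \<in> dual_odometer s" for z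
    proof (cases "z = 1")
      case True
      then show ?thesis using K(1) lam1[OF z] by (simp add: c_def)
    next
      case False
      have nz: "0 < norm (z - 1)" using False by simp
      have "1 / norm (z - 1) \<le> real (root_order z)"
        using root_bound[OF z False] nz by (simp add: divide_le_eq mult.commute)
      then have "1 / norm (z - 1) \<le> K * lam z ^ P" using K(2)[OF z] by linarith
      then have "norm (fourier_coeff s f z) * (1 / norm (z - 1)) \<le> norm (fourier_coeff s f z) * (K * lam z ^ P)"
        by (rule mult_left_mono) simp
      then show ?thesis using False by (simp add: c_def norm_divide mult.commute)
    qed
    have csum: "(\<lambda>z. norm (c z) * lam z ^ N) summable_on dual_odometer s" for N
    proof (rule summable_on_comparison_test)
      show "(\<lambda>z. K * (norm (fourier_coeff s f z) * lam z ^ (P + N))) summable_on dual_odometer s"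
        by (intro summable_on_cmult_right crd_sum f)
    next
      fix z assume z: "z \<in> dual_odometer s"
      have lp: "0 \<le> lam z ^ N" using lam1[OF z] by simp
      show "0 \<le> norm (c z) * lam z ^ N" using lp by simp
      have "norm (c z) * lam z ^ N \<le> K * lam z ^ P * norm (fourier_coeff s f z) * lam z ^ N"
        using cb[OF z] lp by (simp add: mult_right_mono)
      then show "norm (c z) * lam z ^ N \<le> K * (norm (fourier_coeff s f z) * lam z ^ (P + N))"
        by (simp add: power_add ac_simps)
    qed
    have cn: "(\<lambda>z. norm (c z)) summable_on dual_odometer s" using csum[of 0] by simp
    define g where "g = ser c"
    have gu: "ucyl g" unfolding g_def by (rule ucyl_ser[OF cn])
    have gf: "fourier_coeff s g z = c z" if "z \<in> dual_odometer s" for z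
      unfolding g_def by (rule fourier_ser[OF cn that])
    have gC: "g \<in> C_RD s lam"
    proof -
      have "(\<lambda>z. norm (fourier_coeff s g z) * lam z ^ N) summable_on dual_odometer s" for N
        using csum[of N] summable_on_cong[of "dual_odometer s" "\<lambda>z. norm (fourier_coeff s g z) * lam z ^ N" "\<lambda>z. norm (c z) * lam z ^ N"] gf
        by simp
      then show ?thesis using ucyl_cont[OF gu] by (simp add: C_RD_def)
    qed
    define h where "h x = (g (odo_phi s x) - g x) - f x" for x
    have hu: "ucyl h" unfolding h_def by (intro ucyl_diff ucyl_phi gu crd_ucyl f)
    have hz: "fourier_coeff s h z = 0" if z: "z \<in> dual_odometer s" for z
    proof -
      have "(\<lambda>m. avg m (\<lambda>x. (g (odo_phi s x) - g x) * odo_char s (cnj z) x) - avg m (\<lambda>x. f x * odo_char s (cnj z) x))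
         \<longlonglongrightarrow> (z - 1) * fourier_coeff s g z - fourier_coeff s f z"
        by (intro tendsto_diff cob_tendsto fourier_tendsto z gu crd_ucyl f)
      then have "fourier_coeff s h z = (z - 1) * fourier_coeff s g z - fourier_coeff s f z"
        unfolding fourier_coeff_def h_def by (intro haar_unique) (simp add: left_diff_distrib avg_diff)
      also have "\<dots> = 0"
      proof (cases "z = 1")
        case True
        then show ?thesis using f0 by (simp add: fourier_one)
      next
        case False
        then show ?thesis using gf[OF z] by (simp add: c_def)
      qed
      finally show ?thesis .
    qed
    have "f x = g (odo_phi s x) - g x" if x: "x \<in> odometer s" for x
      using uniq[OF hu _ x] hz unfolding h_def by simp
    then show ?thesis using gC unfolding B1_RD_def by blast
  qed
  show ?thesis using P1 P2 P3 P4a P4b by blast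
qed

end
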